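(* Under the setting of the MERL algorithm with true environment $\mu\in\mathcal M$, with $P_{\mu,\pi}$-probability at least $1-\delta/4$ we have $\mu\in\mathcal M_t$ for all time steps $t$.
   Context: Setting. $A$, $O$ are finite sets of actions and observations and $R\subset[0,1]$ a finite set of rewards. A history is a finite sequence of action/observation/reward triples; $\ell(h)$ is its length. An environment $\nu$ is a family of conditional distributions over the next (observation, reward) pair given the history and action. A policy maps finite histories to actions; policy and environment $\nu$ induce a measure $P_{\nu,\pi}$ on infinite histories. Fix $\gamma\in(0,1)$. For a history $h$ of length $t$, $V^\pi_\nu(h;d'):=\mathbf E_{\nu,\pi}[\sum_{k=0}^{d'-1}\gamma^kr_{t+1+k}\mid h]$, $V^\pi_\nu(h):=\lim_{d'\to\infty}V^\pi_\nu(h;d')$; $\pi^*_\nu$ is a fixed optimal policy for $\nu$ and $V^*_\nu:=V^{\pi^*_\nu}_\nu$. Logarithms are natural. $\mathcal M=\{\nu_1,\dots,\nu_N\}$, $\epsilon\in(0,1]$, $\delta\in(0,1)$. Constants. $d:=\lceil\frac1{1-\gamma}\log\frac{8}{(1-\gamma)\epsilon}\rceil$; $\mathcal K:=\{0,1,\dots,\lceil\log_2\frac1{\epsilon(1-\gamma)}\rceil+2\}$; $\delta_1:=\frac{\delta}{32|\mathcal K|N^{3/2}}$; $\alpha:=\frac{4\sqrt N}{4\sqrt N-1}$, $\alpha_j:=\lceil\alpha^j\rceil$. MERL algorithm. It maintains $\mathcal M_t\subseteq\mathcal M$ (initially $\mathcal M$), counters $E(\nu,\kappa)$ (initially 0)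 and statistics $X(\nu,\kappa)_i$. At each time $t$ not inside an ongoing exploration phase, with history $h$: with $\Pi:=\{\pi^*_\nu:\nu\in\mathcal M_t\}$, choose $\overline\nu,\underline\nu\in\mathcal M_t$, $\pi'\in\Pi$ maximizing $V^{\pi'}_{\overline\nu}(h;d)-V^{\pi'}_{\underline\nu}(h;d)=: \Delta$. If $\Delta>\epsilon/4$, an exploration phase starts: follow $\pi'$ for $d$ steps, with return $R=\sum_{j=0}^{d-1}\gamma^jr_{t+1+j}$; with $\kappa:=\min\{\kappa\in\mathbb N:\Delta>\epsilon2^{\kappa-2}\}$ increment $E(\overline\nu,\kappa),E(\underline\nu,\kappa)$ and record $X(\overline\nu,\kappa)_{E(\overline\nu,\kappa)}:=(1-\gamma)(V^{\pi'}_{\overline\nu}(h;d)-R)$, $X(\underline\nu,\kappa)_{E(\underline\nu,\kappa)}:=(1-\gamma)(R-V^{\pi'}_{\underline\nu}(h;d))$. Otherwise take one action $\pi^*_{\nu_i}(h)$ with $i$ minimal such that $\nu_i\in\mathcal M_t$. Whenever some $\nu\in\mathcal M_t$, $\kappa$, $j\in\mathbb N$ satisfy $E(\nu,\kappa)=\alpha_j$ and $\sum_{i=1}^{E(\nu,\kappa)}X(\nu,\kappa)_i\ge\sqrt{2E(\nu,\kappa)\log(E(\nu,\kappa)/\delta_1)}$, $\nu$ is removed. $\pi$ denotes MERL's policy and probabilities are w.r.t. $P_{\mu,\pi}$. *)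

theory Defs
  imports "HOL-Probability.Probability"
begin

text \<open>The finite reward
set R is the range of an (injective) map rew :: 'r => real with values in [0,1].\<close>

type_synonym ('a,'o,'r) hist = "('a \<times> 'o \<times> 'r) list"
type_synonym ('a,'o,'r) env = "('a,'o,'r) hist \<Rightarrow> 'a \<Rightarrow> ('o \<times> 'r) pmf"
type_synonym ('a,'o,'r) policy = "('a,'o,'r) hist \<Rightarrow> 'a"

fun hist_ext :: "('a,'o,'r) env \<Rightarrow> ('a,'o,'r) policy \<Rightarrow> ('a,'o,'r) hist \<Rightarrow> nat
    \<Rightarrow> ('a,'o,'r) hist pmf" where
  "hist_ext \<nu> \<pi> h 0 = return_pmf h"
| "hist_ext \<nu> \<pi> h (Suc n) =
     bind_pmf (hist_ext \<nu> \<pi> h n)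
       (\<lambda>h'. map_pmf (\<lambda>(ob, r). h' @ [(\<pi> h', ob, r)]) (\<nu> h' (\<pi> h')))"

text \<open>Reward of the i-th triple (0-indexed) of a history, i.e. r_{i+1}.\<close>
definition rew_at :: "('r \<Rightarrow> real) \<Rightarrow> ('a,'o,'r) hist \<Rightarrow> nat \<Rightarrow> real" where
  "rew_at rew h i = rew (snd (snd (h ! i)))"

definition Vfin :: "('r \<Rightarrow> real) \<Rightarrow> real \<Rightarrow> ('a,'o,'r) env \<Rightarrow> ('a,'o,'r) policy
    \<Rightarrow> ('a,'o,'r) hist \<Rightarrow> nat \<Rightarrow> real" where
  "Vfin rew \<gamma> \<nu> \<pi> h n =
     measure_pmf.expectation (hist_ext \<nu> \<pi> h n)
       (\<lambda>h'. \<Sum>k<n. \<gamma> ^ k * rew_at rew h' (length h + k))"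

definition Vinf :: "('r \<Rightarrow> real) \<Rightarrow> real \<Rightarrow> ('a,'o,'r) env \<Rightarrow> ('a,'o,'r) policy
    \<Rightarrow> ('a,'o,'r) hist \<Rightarrow> real" where
  "Vinf rew \<gamma> \<nu> \<pi> h = lim (\<lambda>n. Vfin rew \<gamma> \<nu> \<pi> h n)"

definition optimal_policy :: "('r \<Rightarrow> real) \<Rightarrow> real \<Rightarrow> ('a,'o,'r) env \<Rightarrow> ('a,'o,'r) policy \<Rightarrow> bool" where
  "optimal_policy rew \<gamma> \<nu> \<pi> \<longleftrightarrow> (\<forall>\<pi>' h. Vinf rew \<gamma> \<nu> \<pi>' h \<le> Vinf rew \<gamma> \<nu> \<pi> h)"

definition merl_d :: "real \<Rightarrow> real \<Rightarrow> nat" where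
  "merl_d \<gamma> \<epsilon> = nat \<lceil>(1 / (1 - \<gamma>)) * ln (8 / ((1 - \<gamma>) * \<epsilon>))\<rceil>"

definition merl_K :: "real \<Rightarrow> real \<Rightarrow> nat set" where
  "merl_K \<gamma> \<epsilon> = {0 .. nat \<lceil>log 2 (1 / (\<epsilon> * (1 - \<gamma>)))\<rceil> + 2}"

definition merl_delta1 :: "real \<Rightarrow> real \<Rightarrow> real \<Rightarrow> nat \<Rightarrow> real" where
  "merl_delta1 \<gamma> \<epsilon> \<delta> N = \<delta> / (32 * real (card (merl_K \<gamma> \<epsilon>)) * real N powr (3/2))"

definition merl_alpha :: "nat \<Rightarrow> real" where
  "merl_alpha N = 4 * sqrt (real N) / (4 * sqrt (real N) - 1)"

definition merl_alpha_j :: "nat \<Rightarrow> nat \<Rightarrow> nat" where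
  "merl_alpha_j N j = nat \<lceil>merl_alpha N ^ j\<rceil>"

text \<open>The model class is M = {env i | i < N}; environments and their fixed optimal
policies are referred to by index.  An ongoing exploration phase stores: upper index,
lower index, index of the followed optimal policy pi', kappa, V^{pi'}_{upper}(h;d),
V^{pi'}_{lower}(h;d) (h = history at the start of the phase), the number of steps
already taken and the discounted return accumulated so far.\<close>

datatype phase = Phase nat nat nat nat real real nat real

definition phase_pol :: "phase \<Rightarrow> nat" where
  "phase_pol ph = (case ph of Phase u l p \<kappa> vu vl k R \<Rightarrow> p)"

record merl_state =
  Ms :: "nat set"                       \<comment> \<open>M_t (as a set of indices)\<close>
  Xs :: "nat \<Rightarrow> nat \<Rightarrow> real list"     \<comment> \<open>X(nu,kappa)_1..X(nu,kappa)_E, E(nu,kappa) = length\<close>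
  phase :: "phase option"

definition merl_init :: "nat \<Rightarrow> merl_state" where
  "merl_init N = \<lparr>Ms = {..<N}, Xs = (\<lambda>_ _. []), phase = None\<rparr>"

definition merl_Delta :: "('r \<Rightarrow> real) \<Rightarrow> real \<Rightarrow> real \<Rightarrow> (nat \<Rightarrow> ('a,'o,'r) env)
    \<Rightarrow> (nat \<Rightarrow> ('a,'o,'r) policy) \<Rightarrow> ('a,'o,'r) hist \<Rightarrow> nat \<times> nat \<times> nat \<Rightarrow> real" where
  "merl_Delta rew \<gamma> \<epsilon> env opt h x = (case x of (u, l, p) \<Rightarrow>
     Vfin rew \<gamma> (env u) (opt p) h (merl_d \<gamma> \<epsilon>) - Vfin rew \<gamma> (env l) (opt p) h (merl_d \<gamma> \<epsilon>))"

definition valid_tiebreak :: "('r \<Rightarrow> real) \<Rightarrow> real \<Rightarrow> real \<Rightarrow> nat \<Rightarrow> (nat \<Rightarrow> ('a,'o,'r) env)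
    \<Rightarrow> (nat \<Rightarrow> ('a,'o,'r) policy) \<Rightarrow> (('a,'o,'r) hist \<Rightarrow> nat set \<Rightarrow> nat \<times> nat \<times> nat) \<Rightarrow> bool" where
  "valid_tiebreak rew \<gamma> \<epsilon> N env opt tb \<longleftrightarrow>
     (\<forall>h M. M \<noteq> {} \<longrightarrow> M \<subseteq> {..<N} \<longrightarrow>
        tb h M \<in> M \<times> M \<times> M \<and>
        (\<forall>y \<in> M \<times> M \<times> M. merl_Delta rew \<gamma> \<epsilon> env opt h y \<le> merl_Delta rew \<gamma> \<epsilon> env opt h (tb h M)))"

definition merl_decide :: "('r \<Rightarrow> real) \<Rightarrow> real \<Rightarrow> real \<Rightarrow> (nat \<Rightarrow> ('a,'o,'r) env)
    \<Rightarrow> (nat \<Rightarrow> ('a,'o,'r) policy) \<Rightarrow> (('a,'o,'r) hist \<Rightarrow> nat set \<Rightarrow> nat \<times> nat \<times> nat)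
    \<Rightarrow> nat set \<Rightarrow> ('a,'o,'r) hist \<Rightarrow> (nat \<times> nat \<times> nat) option" where
  "merl_decide rew \<gamma> \<epsilon> env opt tb M h =
     (if M = {} then None
      else if merl_Delta rew \<gamma> \<epsilon> env opt h (tb h M) > \<epsilon> / 4 then Some (tb h M) else None)"

definition merl_kappa :: "real \<Rightarrow> real \<Rightarrow> nat" where
  "merl_kappa \<epsilon> \<Delta> = (LEAST \<kappa>::nat. \<Delta> > \<epsilon> * 2 powr (real \<kappa> - 2))"

definition removal_cond :: "real \<Rightarrow> real \<Rightarrow> real \<Rightarrow> nat \<Rightarrow> real list \<Rightarrow> bool" where
  "removal_cond \<gamma> \<epsilon> \<delta> N xs \<longleftrightarrow>
     (\<exists>j. length xs = merl_alpha_j N j) \<and>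
     sum_list xs \<ge> sqrt (2 * real (length xs) * ln (real (length xs) / merl_delta1 \<gamma> \<epsilon> \<delta> N))"

definition merl_finalize :: "real \<Rightarrow> real \<Rightarrow> real \<Rightarrow> nat \<Rightarrow> merl_state
    \<Rightarrow> nat \<Rightarrow> nat \<Rightarrow> nat \<Rightarrow> real \<Rightarrow> real \<Rightarrow> real \<Rightarrow> merl_state" where
  "merl_finalize \<gamma> \<epsilon> \<delta> N s u l \<kappa> vu vl R =
     (let X1 = (Xs s)(u := (Xs s u)(\<kappa> := Xs s u \<kappa> @ [(1 - \<gamma>) * (vu - R)]));
          X2 = X1(l := (X1 l)(\<kappa> := X1 l \<kappa> @ [(1 - \<gamma>) * (R - vl)]))
      in \<lparr>Ms = {\<nu> \<in> Ms s. \<not> (\<exists>\<kappa>'. removal_cond \<gamma> \<epsilon> \<delta> N (X2 \<nu> \<kappa>'))},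
          Xs = X2, phase = None\<rparr>)"

definition merl_advance :: "('r \<Rightarrow> real) \<Rightarrow> real \<Rightarrow> real \<Rightarrow> real \<Rightarrow> nat \<Rightarrow> merl_state
    \<Rightarrow> phase \<Rightarrow> 'r \<Rightarrow> merl_state" where
  "merl_advance rew \<gamma> \<epsilon> \<delta> N s ph r = (case ph of Phase u l p \<kappa> vu vl k R \<Rightarrow>
     (let R' = R + \<gamma> ^ k * rew r in
      if Suc k \<ge> merl_d \<gamma> \<epsilon> then merl_finalize \<gamma> \<epsilon> \<delta> N s u l \<kappa> vu vl R'
      else s\<lparr>phase := Some (Phase u l p \<kappa> vu vl (Suc k) R')\<rparr>))"

definition merl_step :: "('r \<Rightarrow> real) \<Rightarrow> real \<Rightarrow> real \<Rightarrow> real \<Rightarrow> nat \<Rightarrow> (nat \<Rightarrow> ('a,'o,'r) env)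
    \<Rightarrow> (nat \<Rightarrow> ('a,'o,'r) policy) \<Rightarrow> (('a,'o,'r) hist \<Rightarrow> nat set \<Rightarrow> nat \<times> nat \<times> nat)
    \<Rightarrow> merl_state \<Rightarrow> ('a,'o,'r) hist \<Rightarrow> 'a \<times> 'o \<times> 'r \<Rightarrow> merl_state" where
  "merl_step rew \<gamma> \<epsilon> \<delta> N env opt tb s h x =
     (case phase s of
        Some ph \<Rightarrow> merl_advance rew \<gamma> \<epsilon> \<delta> N s ph (snd (snd x))
      | None \<Rightarrow>
          (case merl_decide rew \<gamma> \<epsilon> env opt tb (Ms s) h of
             None \<Rightarrow> s
           | Some (u, l, p) \<Rightarrow>
               (let \<Delta> = merl_Delta rew \<gamma> \<epsilon> env opt h (u, l, p);
                    vu = Vfin rew \<gamma> (env u) (opt p) h (merl_d \<gamma> \<epsilon>);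
                    vl = Vfin rew \<gamma> (env l) (opt p) h (merl_d \<gamma> \<epsilon>)
                in merl_advance rew \<gamma> \<epsilon> \<delta> N s
                     (Phase u l p (merl_kappa \<epsilon> \<Delta>) vu vl 0 0) (snd (snd x)))))"

definition merl_run :: "('r \<Rightarrow> real) \<Rightarrow> real \<Rightarrow> real \<Rightarrow> real \<Rightarrow> nat \<Rightarrow> (nat \<Rightarrow> ('a,'o,'r) env)
    \<Rightarrow> (nat \<Rightarrow> ('a,'o,'r) policy) \<Rightarrow> (('a,'o,'r) hist \<Rightarrow> nat set \<Rightarrow> nat \<times> nat \<times> nat)
    \<Rightarrow> ('a,'o,'r) hist \<Rightarrow> merl_state" where
  "merl_run rew \<gamma> \<epsilon> \<delta> N env opt tb h =
     fst (foldl (\<lambda>(s, hp) x. (merl_step rew \<gamma> \<epsilon> \<delta> N env opt tb s hp x, hp @ [x]))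
                (merl_init N, []) h)"

text \<open>MERL's policy.  (If M_t = {} the paper's action is undefined; we then act with
opt 0, which is irrelevant for the statement.)\<close>
definition merl_policy :: "('r \<Rightarrow> real) \<Rightarrow> real \<Rightarrow> real \<Rightarrow> real \<Rightarrow> nat \<Rightarrow> (nat \<Rightarrow> ('a,'o,'r) env)
    \<Rightarrow> (nat \<Rightarrow> ('a,'o,'r) policy) \<Rightarrow> (('a,'o,'r) hist \<Rightarrow> nat set \<Rightarrow> nat \<times> nat \<times> nat)
    \<Rightarrow> ('a,'o,'r) policy" where
  "merl_policy rew \<gamma> \<epsilon> \<delta> N env opt tb h =
     (let s = merl_run rew \<gamma> \<epsilon> \<delta> N env opt tb h in
      case phase s of
        Some ph \<Rightarrow> opt (phase_pol ph) h
      | None \<Rightarrow>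
          (case merl_decide rew \<gamma> \<epsilon> env opt tb (Ms s) h of
             Some (u, l, p) \<Rightarrow> opt p h
           | None \<Rightarrow> (if Ms s = {} then opt 0 h else opt (LEAST i. i \<in> Ms s) h)))"

definition is_interaction_measure :: "('a,'o,'r) env \<Rightarrow> ('a,'o,'r) policy
    \<Rightarrow> ('a \<times> 'o \<times> 'r) stream measure \<Rightarrow> bool" where
  "is_interaction_measure \<nu> \<pi> P \<longleftrightarrow>
     prob_space P \<and> sets P = sets (stream_space (count_space UNIV)) \<and>
     (\<forall>h. measure P {\<omega> \<in> space P. stake (length h) \<omega> = h} = pmf (hist_ext \<nu> \<pi> [] (length h)) h)"

end

theory Submission
  imports Defs
begin


lemma hist_ext_support:
  "h' \<in> set_pmf (hist_ext \<nu> \<pi> h n) \<Longrightarrow> \<exists>xs. h' = h @ xs \<and> length xs = n"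
proof (induction n arbitrary: h')
  case 0
  then show ?case by simp
next
  case (Suc n)
  then obtain h'' obr where h'': "h'' \<in> set_pmf (hist_ext \<nu> \<pi> h n)"
    and h': "h' = (case obr of (ob, r) \<Rightarrow> h'' @ [(\<pi> h'', ob, r)])"
    by auto
  from Suc.IH[OF h''] obtain xs where "h'' = h @ xs" "length xs = n" by blast
  then show ?case using h' by (cases obr) auto
qed

lemma hist_ext_add:
  "hist_ext \<nu> \<pi> h (n + m) = bind_pmf (hist_ext \<nu> \<pi> h n) (\<lambda>h'. hist_ext \<nu> \<pi> h' m)"
proof (induction m)
  case 0
  then show ?case by (simp add: bind_return_pmf')
next
  case (Suc m)
  then show ?case by (simp add: bind_assoc_pmf)
qed

lemma hist_ext_cong:
  assumes "\<And>xs. length xs < n \<Longrightarrow> \<pi>1 (h @ xs) = \<pi>2 (h @ xs)"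
  shows "hist_ext \<nu> \<pi>1 h n = hist_ext \<nu> \<pi>2 h n"
  using assms
proof (induction n)
  case 0
  then show ?case by simp
next
  case (Suc n)
  have IH: "hist_ext \<nu> \<pi>1 h n = hist_ext \<nu> \<pi>2 h n" using Suc by simp
  show ?case
    unfolding hist_ext.simps IH
  proof (rule bind_pmf_cong[OF refl])
    fix h' assume "h' \<in> set_pmf (hist_ext \<nu> \<pi>2 h n)"
    then obtain xs where "h' = h @ xs" "length xs = n" using hist_ext_support by blast
    then have "\<pi>1 h' = \<pi>2 h'" using Suc.prems by simp
    then show "map_pmf (\<lambda>(ob, r). h' @ [(\<pi>1 h', ob, r)]) (\<nu> h' (\<pi>1 h')) =
               map_pmf (\<lambda>(ob, r). h' @ [(\<pi>2 h', ob, r)]) (\<nu> h' (\<pi>2 h'))" by simp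
  qed
qed

lemma hist_ext_finite:
  "finite (set_pmf (hist_ext \<nu> \<pi> h n :: ('a::finite \<times> 'o::finite \<times> 'r::finite) list pmf))"
proof -
  have "set_pmf (hist_ext \<nu> \<pi> h n) \<subseteq> (\<lambda>xs. h @ xs) ` {xs. set xs \<subseteq> UNIV \<and> length xs = n}"
    using hist_ext_support by fastforce
  moreover have "finite ((\<lambda>xs. h @ xs) ` {xs. set xs \<subseteq> (UNIV :: ('a \<times> 'o \<times> 'r) set) \<and> length xs = n})"
    by (intro finite_imageI finite_lists_length_eq) simp
  ultimately show ?thesis by (rule finite_subset)
qed

lemma hist_ext_one: "hist_ext \<nu> \<pi> h (Suc m) = bind_pmf (hist_ext \<nu> \<pi> h 1) (\<lambda>h'. hist_ext \<nu> \<pi> h' m)"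
  using hist_ext_add[of \<nu> \<pi> h 1 m] by simp

lemma kappa0: assumes "D > e/4" shows "merl_kappa e D = 0"
proof -
    have hp: "(2::real) powr (real (0::nat) - 2) = 1/4" by (simp add: powr_minus)
    have "e * (2::real) powr (real (0::nat) - 2) = e / 4" by (subst hp) simp
    then have "D > e * (2::real) powr (real (0::nat) - 2)"
      using assms by linarith
    then show ?thesis unfolding merl_kappa_def by (intro Least_eq_0[of "\<lambda>k. D > e * 2 powr (real k - 2)"])
qed

locale merl_loc =
  fixes rew :: "'r::finite \<Rightarrow> real"
    and env :: "nat \<Rightarrow> ('a::finite, 'o::finite, 'r) env"
    and opt :: "nat \<Rightarrow> ('a, 'o, 'r) policy"
    and tb :: "('a, 'o, 'r) hist \<Rightarrow> nat set \<Rightarrow> nat \<times> nat \<times> nat"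
    and \<gamma> \<epsilon> \<delta> :: real
    and N i0 :: nat
  assumes rew_bd: "\<forall>x. 0 \<le> rew x \<and> rew x \<le> 1"
    and g0: "0 < \<gamma>" and g1: "\<gamma> < 1"
    and e0: "0 < \<epsilon>" and e1: "\<epsilon> \<le> 1"
    and d0: "0 < \<delta>" and d1: "\<delta> < 1"
    and tbv: "valid_tiebreak rew \<gamma> \<epsilon> N env opt tb"
    and mu: "i0 < N"
begin

abbreviation "d \<equiv> merl_d \<gamma> \<epsilon>"
abbreviation "run \<equiv> merl_run rew \<gamma> \<epsilon> \<delta> N env opt tb"
abbreviation "stp \<equiv> merl_step rew \<gamma> \<epsilon> \<delta> N env opt tb"
abbreviation "pol \<equiv> merl_policy rew \<gamma> \<epsilon> \<delta> N env opt tb"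
abbreviation "dec \<equiv> merl_decide rew \<gamma> \<epsilon> env opt tb"

lemma foldl_snd: "snd (foldl (\<lambda>(s, hp) x. (g s hp x, hp @ [x])) (s0, hp0) h) = hp0 @ h"
  by (induction h arbitrary: s0 hp0) auto

lemma foldl_run:
  "foldl (\<lambda>(s, hp) x. (stp s hp x, hp @ [x])) (merl_init N, []) h = (run h, h)"
proof -
  have s: "snd (foldl (\<lambda>(s, hp) x. (stp s hp x, hp @ [x])) (merl_init N, []) h) = h"
    using foldl_snd[of stp "merl_init N" "[]" h] by simp
  show ?thesis unfolding merl_run_def by (rule prod_eqI) (simp_all add: s)
qed

lemma run_snoc: "run (h @ [x]) = stp (run h) h x"
proof -
  let ?F = "\<lambda>(s, hp) x. (stp s hp x, hp @ [x])"
  have "run (h @ [x]) = fst (foldl ?F (merl_init N, []) (h @ [x]))" by (simp only: merl_run_def)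
  also have "\<dots> = fst (?F (foldl ?F (merl_init N, []) h) x)" by (simp only: foldl_append foldl_Cons foldl_Nil)
  also have "\<dots> = fst (?F (run h, h) x)" by (simp only: foldl_run)
  also have "\<dots> = stp (run h) h x" by simp
  finally show ?thesis .
qed

lemma run_Nil: "run [] = merl_init N"
  by (simp add: merl_run_def)

lemma d_pos: "d \<ge> 1"
proof -
  have "(1 - \<gamma>) * \<epsilon> \<le> 1" using g0 g1 e0 e1 by (simp add: mult_le_one)
  moreover have "(1 - \<gamma>) * \<epsilon> > 0" using g1 e0 by simp
  ultimately have "8 / ((1 - \<gamma>) * \<epsilon>) > 1" by (simp add: less_divide_eq)
  then have "ln (8 / ((1 - \<gamma>) * \<epsilon>)) > 0" by (rule ln_gt_zero)
  then have "(1 / (1 - \<gamma>)) * ln (8 / ((1 - \<gamma>) * \<epsilon>)) > 0" using g1 by simp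
  then have "1 \<le> \<lceil>(1 / (1 - \<gamma>)) * ln (8 / ((1 - \<gamma>) * \<epsilon>))\<rceil>" by simp
  from nat_mono[OF this] show ?thesis unfolding merl_d_def by simp
qed

lemma advance_eq:
  "merl_advance rew \<gamma> \<epsilon> \<delta> N s (Phase u l p \<kappa> vu vl k R) r =
    (if Suc k \<ge> d then merl_finalize \<gamma> \<epsilon> \<delta> N s u l \<kappa> vu vl (R + \<gamma> ^ k * rew r)
     else s\<lparr>phase := Some (Phase u l p \<kappa> vu vl (Suc k) (R + \<gamma> ^ k * rew r))\<rparr>)"
  by (simp add: merl_advance_def Let_def)

lemma fin_Ms: "Ms (merl_finalize \<gamma> \<epsilon> \<delta> N s u l \<kappa> vu vl R) \<subseteq> Ms s"
  by (auto simp: merl_finalize_def Let_def)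

lemma fin_phase: "phase (merl_finalize \<gamma> \<epsilon> \<delta> N s u l \<kappa> vu vl R) = None"
  by (auto simp: merl_finalize_def Let_def)

lemma fin_Xs: "u \<noteq> l \<Longrightarrow> Xs (merl_finalize \<gamma> \<epsilon> \<delta> N s u l \<kappa> vu vl R) i \<kappa>' =
   (if i = u \<and> \<kappa>' = \<kappa> then Xs s i \<kappa>' @ [(1 - \<gamma>) * (vu - R)]
    else if i = l \<and> \<kappa>' = \<kappa> then Xs s i \<kappa>' @ [(1 - \<gamma>) * (R - vl)]
    else Xs s i \<kappa>')"
  by (auto simp: merl_finalize_def Let_def)

lemma fin_Ms_eq: "Ms (merl_finalize \<gamma> \<epsilon> \<delta> N s u l \<kappa> vu vl R) =
   {\<nu> \<in> Ms s. \<not> (\<exists>\<kappa>'. removal_cond \<gamma> \<epsilon> \<delta> N (Xs (merl_finalize \<gamma> \<epsilon> \<delta> N s u l \<kappa> vu vl R) \<nu> \<kappa>'))}"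
  by (simp only: merl_finalize_def Let_def merl_state.select_convs)

lemma fin_removed: "i \<in> Ms s \<Longrightarrow> i \<notin> Ms (merl_finalize \<gamma> \<epsilon> \<delta> N s u l \<kappa> vu vl R) \<Longrightarrow>
   \<exists>\<kappa>'. removal_cond \<gamma> \<epsilon> \<delta> N (Xs (merl_finalize \<gamma> \<epsilon> \<delta> N s u l \<kappa> vu vl R) i \<kappa>')"
  using fin_Ms_eq[of s u l \<kappa> vu vl R] by blast

lemma alpha_ge1: "merl_alpha N \<ge> 1"
proof -
  have "sqrt (real N) \<ge> 1" using mu by simp
  then have "4 * sqrt (real N) - 1 > 0" by linarith
  then show ?thesis unfolding merl_alpha_def by (simp add: le_divide_eq)
qed

lemma alpha_j_pos: "merl_alpha_j N j \<ge> 1"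
proof -
  have "merl_alpha N ^ j \<ge> 1" using alpha_ge1 by (simp add: one_le_power)
  then show ?thesis unfolding merl_alpha_j_def by linarith
qed

lemma removal_len: "removal_cond \<gamma> \<epsilon> \<delta> N xs \<Longrightarrow> length xs \<ge> 1"
  using alpha_j_pos unfolding removal_cond_def by metis

lemma dec_Some:
  assumes "dec M h = Some (u, l, p)" "M \<subseteq> {..<N}"
  shows "u \<in> M" "l \<in> M" "p \<in> M" "u \<noteq> l"
    "merl_Delta rew \<gamma> \<epsilon> env opt h (u, l, p) > \<epsilon> / 4"
    "merl_kappa \<epsilon> (merl_Delta rew \<gamma> \<epsilon> env opt h (u, l, p)) = 0"
proof -
  have M: "M \<noteq> {}" and tbh: "tb h M = (u, l, p)" and D: "merl_Delta rew \<gamma> \<epsilon> env opt h (u, l, p) > \<epsilon> / 4"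
    using assms(1) by (auto simp: merl_decide_def split: if_splits)
  then have "tb h M \<in> M \<times> M \<times> M" using tbv assms(2) unfolding valid_tiebreak_def by blast
  then show "u \<in> M" "l \<in> M" "p \<in> M" using tbh by auto
  show "merl_Delta rew \<gamma> \<epsilon> env opt h (u, l, p) > \<epsilon> / 4" by fact
  show "u \<noteq> l"
  proof
    assume "u = l" then have "merl_Delta rew \<gamma> \<epsilon> env opt h (u, l, p) = 0"
      by (simp add: merl_Delta_def)
    then show False using D e0 by simp
  qed
  show "merl_kappa \<epsilon> (merl_Delta rew \<gamma> \<epsilon> env opt h (u, l, p)) = 0"
    using D by (rule kappa0)
qed

definition inv_st :: "merl_state \<Rightarrow> nat \<Rightarrow> bool" where
  "inv_st s n \<longleftrightarrow> Ms s \<subseteq> {..<N} \<and> (\<forall>i \<kappa>. \<kappa> \<noteq> 0 \<longrightarrow> Xs s i \<kappa> = []) \<and>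
     (\<forall>i. length (Xs s i 0) \<le> n) \<and>
     (\<forall>i<N. i \<notin> Ms s \<longrightarrow> removal_cond \<gamma> \<epsilon> \<delta> N (Xs s i 0)) \<and>
     (\<forall>u l p \<kappa> vu vl k R. phase s = Some (Phase u l p \<kappa> vu vl k R) \<longrightarrow>
        u \<in> Ms s \<and> l \<in> Ms s \<and> u \<noteq> l \<and> \<kappa> = 0 \<and> k < d)"

lemma inv_init: "inv_st (merl_init N) 0"
  unfolding inv_st_def merl_init_def by simp

lemma adv_inv:
  assumes I: "inv_st s n" and u: "u \<in> Ms s" and l: "l \<in> Ms s" and ul: "u \<noteq> l" and k: "k < d"
  shows "inv_st (merl_advance rew \<gamma> \<epsilon> \<delta> N s (Phase u l p 0 vu vl k R) r) (Suc n)"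
proof (cases "Suc k \<ge> d")
  case True
  let ?s = "merl_finalize \<gamma> \<epsilon> \<delta> N s u l 0 vu vl (R + \<gamma> ^ k * rew r)"
  have eq: "merl_advance rew \<gamma> \<epsilon> \<delta> N s (Phase u l p 0 vu vl k R) r = ?s"
    using True by (simp add: advance_eq)
  have X: "\<And>i \<kappa>'. Xs ?s i \<kappa>' = (if i = u \<and> \<kappa>' = 0 then Xs s i \<kappa>' @ [(1 - \<gamma>) * (vu - (R + \<gamma> ^ k * rew r))]
    else if i = l \<and> \<kappa>' = 0 then Xs s i \<kappa>' @ [(1 - \<gamma>) * ((R + \<gamma> ^ k * rew r) - vl)]
    else Xs s i \<kappa>')" using fin_Xs[OF ul] by blast
  have I1: "Ms s \<subseteq> {..<N}" and I2: "\<And>i \<kappa>. \<kappa> \<noteq> 0 \<Longrightarrow> Xs s i \<kappa> = []"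
    and I3: "\<And>i. length (Xs s i 0) \<le> n" and I4: "\<And>i. i < N \<Longrightarrow> i \<notin> Ms s \<Longrightarrow> removal_cond \<gamma> \<epsilon> \<delta> N (Xs s i 0)"
    using I unfolding inv_st_def by blast+
  have "Ms ?s \<subseteq> {..<N}" using fin_Ms I1 by blast
  moreover have "\<forall>i \<kappa>. \<kappa> \<noteq> 0 \<longrightarrow> Xs ?s i \<kappa> = []" using X I2 by simp
  moreover have "\<forall>i. length (Xs ?s i 0) \<le> Suc n" using X I3 by (simp add: le_SucI)
  moreover have "\<forall>i<N. i \<notin> Ms ?s \<longrightarrow> removal_cond \<gamma> \<epsilon> \<delta> N (Xs ?s i 0)"
  proof (intro allI impI)
    fix i assume iN: "i < N" and iM: "i \<notin> Ms ?s"
    show "removal_cond \<gamma> \<epsilon> \<delta> N (Xs ?s i 0)"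
    proof (cases "i \<in> Ms s")
      case True
      then obtain \<kappa>' where rc: "removal_cond \<gamma> \<epsilon> \<delta> N (Xs ?s i \<kappa>')" using fin_removed iM by blast
      have "\<kappa>' = 0"
      proof (rule ccontr)
        assume "\<kappa>' \<noteq> 0"
        then have "Xs ?s i \<kappa>' = []" using X I2 by simp
        then show False using rc removal_len by fastforce
      qed
      then show ?thesis using rc by simp
    next
      case False
      then have "i \<noteq> u" "i \<noteq> l" using u l by auto
      then show ?thesis using X I4[OF iN False] by simp
    qed
  qed
  moreover have "phase ?s = None" by (rule fin_phase)
  ultimately show ?thesis unfolding eq inv_st_def by simp
next
  case False
  then have eq: "merl_advance rew \<gamma> \<epsilon> \<delta> N s (Phase u l p 0 vu vl k R) r =
     s\<lparr>phase := Some (Phase u l p 0 vu vl (Suc k) (R + \<gamma> ^ k * rew r))\<rparr>"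
    by (simp add: advance_eq)
  have I1: "Ms s \<subseteq> {..<N}" and I2: "\<forall>i \<kappa>. \<kappa> \<noteq> 0 \<longrightarrow> Xs s i \<kappa> = []"
    and I3: "\<forall>i. length (Xs s i 0) \<le> Suc n" and I4: "\<forall>i<N. i \<notin> Ms s \<longrightarrow> removal_cond \<gamma> \<epsilon> \<delta> N (Xs s i 0)"
    using I unfolding inv_st_def by (blast intro: le_SucI)+
  have k': "Suc k < d" using False by simp
  show ?thesis unfolding eq inv_st_def using I1 I2 I3 I4 u l ul k' by simp
qed

lemma inv_step:
  assumes I: "inv_st s n"
  shows "inv_st (stp s h x) (Suc n)"
proof (cases "phase s")
  case (Some ph)
  then obtain u l p \<kappa> vu vl k R where ph: "ph = Phase u l p \<kappa> vu vl k R" by (cases ph) auto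
  then have props: "u \<in> Ms s" "l \<in> Ms s" "u \<noteq> l" "\<kappa> = 0" "k < d"
    using I Some unfolding inv_st_def by blast+
  have "stp s h x = merl_advance rew \<gamma> \<epsilon> \<delta> N s (Phase u l p 0 vu vl k R) (snd (snd x))"
    using Some ph props(4) by (simp add: merl_step_def)
  then show ?thesis using adv_inv[OF I props(1-3,5)] by simp
next
  case None
  show ?thesis
  proof (cases "dec (Ms s) h")
    case None2: None
    then have "stp s h x = s" using None by (simp add: merl_step_def)
    moreover have "inv_st s (Suc n)" using I unfolding inv_st_def by (blast intro: le_SucI)
    ultimately show ?thesis by simp
  next
    case (Some y)
    then obtain u l p where y: "dec (Ms s) h = Some (u, l, p)" by (cases y) auto
    have MN: "Ms s \<subseteq> {..<N}" using I unfolding inv_st_def by blast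
    note ds = dec_Some[OF y MN]
    have "stp s h x = merl_advance rew \<gamma> \<epsilon> \<delta> N s (Phase u l p 0
        (Vfin rew \<gamma> (env u) (opt p) h d) (Vfin rew \<gamma> (env l) (opt p) h d) 0 0) (snd (snd x))"
      using None y ds(6) by (simp add: merl_step_def Let_def)
    then show ?thesis using adv_inv[OF I ds(1,2,4)] d_pos by simp
  qed
qed

lemma inv_run: "inv_st (run h) (length h)"
proof (induction h rule: rev_induct)
  case Nil
  then show ?case by (simp add: run_Nil inv_init)
next
  case (snoc x xs)
  then show ?case by (simp add: run_snoc inv_step)
qed

lemma adv_Ms: "Ms (merl_advance rew \<gamma> \<epsilon> \<delta> N s ph r) \<subseteq> Ms s"
  by (cases ph) (auto simp: advance_eq dest: set_mp[OF fin_Ms])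

lemma step_Ms: "Ms (stp s h x) \<subseteq> Ms s"
  unfolding merl_step_def
  by (auto simp: Let_def split: option.splits dest: set_mp[OF adv_Ms])

lemma Ms_mono: "Ms (run (h @ xs)) \<subseteq> Ms (run h)"
proof (induction xs rule: rev_induct)
  case Nil
  then show ?case by simp
next
  case (snoc x xs)
  then show ?case using step_Ms[of "run (h @ xs)" "h @ xs" x]
    by (simp add: run_snoc[of "h @ xs", simplified])
qed

definition Rsum :: "('a \<times> 'o \<times> 'r) list \<Rightarrow> real" where
  "Rsum xs = (\<Sum>k<length xs. \<gamma> ^ k * rew (snd (snd (xs ! k))))"

lemma Rsum_snoc: "Rsum (xs @ [x]) = Rsum xs + \<gamma> ^ length xs * rew (snd (snd x))"
proof -
  have "Rsum (xs @ [x]) = (\<Sum>k<length xs. \<gamma> ^ k * rew (snd (snd ((xs @ [x]) ! k)))) + \<gamma> ^ length xs * rew (snd (snd x))"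
    unfolding Rsum_def by (simp add: nth_append)
  also have "(\<Sum>k<length xs. \<gamma> ^ k * rew (snd (snd ((xs @ [x]) ! k)))) = Rsum xs"
    unfolding Rsum_def by (rule sum.cong) (auto simp: nth_append)
  finally show ?thesis .
qed

lemma fin_phase_upd: "merl_finalize \<gamma> \<epsilon> \<delta> N (s\<lparr>phase := z\<rparr>) u l \<kappa> vu vl R = merl_finalize \<gamma> \<epsilon> \<delta> N s u l \<kappa> vu vl R"
  by (simp add: merl_finalize_def Let_def)

lemma phase_run:
  assumes ph: "phase (run h) = None" and dc: "dec (Ms (run h)) h = Some (u, l, p)"
    and len: "1 \<le> length xs" "length xs \<le> d"
  shows "run (h @ xs) = (if length xs < d
      then (run h)\<lparr>phase := Some (Phase u l p 0 (Vfin rew \<gamma> (env u) (opt p) h d) (Vfin rew \<gamma> (env l) (opt p) h d) (length xs) (Rsum xs))\<rparr>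
      else merl_finalize \<gamma> \<epsilon> \<delta> N (run h) u l 0 (Vfin rew \<gamma> (env u) (opt p) h d) (Vfin rew \<gamma> (env l) (opt p) h d) (Rsum xs))"
  using len
proof (induction xs rule: rev_induct)
  case Nil
  then show ?case by simp
next
  case (snoc x xs)
  let ?vu = "Vfin rew \<gamma> (env u) (opt p) h d" and ?vl = "Vfin rew \<gamma> (env l) (opt p) h d"
  have MN: "Ms (run h) \<subseteq> {..<N}" using inv_run[of h] unfolding inv_st_def by blast
  note ds = dec_Some[OF dc MN]
  show ?case
  proof (cases "xs = []")
    case True
    have "run (h @ xs @ [x]) = stp (run h) h x" using True by (simp add: run_snoc)
    also have "\<dots> = merl_advance rew \<gamma> \<epsilon> \<delta> N (run h) (Phase u l p 0 ?vu ?vl 0 0) (snd (snd x))"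
      using ph dc ds(6) by (simp add: merl_step_def Let_def)
    finally show ?thesis using True by (simp add: advance_eq Rsum_def)
  next
    case False
    then have l1: "1 \<le> length xs" and l2: "length xs < d" using snoc.prems by (auto simp: Suc_le_eq)
    then have IH: "run (h @ xs) = (run h)\<lparr>phase := Some (Phase u l p 0 ?vu ?vl (length xs) (Rsum xs))\<rparr>"
      using snoc.IH by simp
    have "run (h @ xs @ [x]) = stp (run (h @ xs)) (h @ xs) x" using run_snoc[of "h @ xs" x] by simp
    also have "\<dots> = merl_advance rew \<gamma> \<epsilon> \<delta> N (run (h @ xs)) (Phase u l p 0 ?vu ?vl (length xs) (Rsum xs)) (snd (snd x))"
      unfolding IH by (simp add: merl_step_def)
    finally show ?thesis unfolding IH by (simp add: advance_eq Rsum_snoc fin_phase_upd)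
  qed
qed

lemma phase_pol:
  assumes ph: "phase (run h) = None" and dc: "dec (Ms (run h)) h = Some (u, l, p)"
    and len: "length xs < d"
  shows "pol (h @ xs) = opt p (h @ xs)"
proof (cases "xs = []")
  case True
  then show ?thesis using ph dc by (simp add: merl_policy_def)
next
  case False
  then have "run (h @ xs) = (run h)\<lparr>phase := Some (Phase u l p 0 (Vfin rew \<gamma> (env u) (opt p) h d) (Vfin rew \<gamma> (env l) (opt p) h d) (length xs) (Rsum xs))\<rparr>"
    using phase_run[OF ph dc, of xs] len by (simp add: Suc_le_eq)
  then show ?thesis by (simp add: merl_policy_def phase_pol_def)
qed

definition "dl1 = merl_delta1 \<gamma> \<epsilon> \<delta> N"
definition cc :: "nat \<Rightarrow> real" where "cc n = sqrt (2 * real n * ln (real n / dl1))"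
definition lam :: "nat \<Rightarrow> real" where "lam n = 4 * cc n / real n"
definition gfun :: "nat \<Rightarrow> real list \<Rightarrow> real" where
  "gfun n L = exp (lam n * (sum_list (take n L) - cc n) + (lam n)^2 * (real n - real (min (length L) n)) / 8)"
definition G :: "nat \<Rightarrow> real list \<Rightarrow> ennreal" where
  "G M L = (\<Sum>n\<in>{1..M}. ennreal (gfun n L))"

lemma dl1_pos: "0 < dl1" and dl1_le: "dl1 \<le> \<delta> / 32"
proof -
  have c: "real (card (merl_K \<gamma> \<epsilon>)) \<ge> 1" unfolding merl_K_def by simp
  have q: "real N powr (3/2) \<ge> 1" using mu by (intro ge_one_powr_ge_zero) auto
  have cq: "real (card (merl_K \<gamma> \<epsilon>)) * real N powr (3/2) \<ge> 1 * 1"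
    using c q by (intro mult_mono) auto
  have pos: "32 * real (card (merl_K \<gamma> \<epsilon>)) * real N powr (3/2) \<ge> 32"
    using cq by (simp add: mult.assoc)
  show "0 < dl1" unfolding dl1_def merl_delta1_def using pos d0 by simp
  show "dl1 \<le> \<delta> / 32" unfolding dl1_def merl_delta1_def using pos d0
    by (rule_tac divide_left_mono) auto
qed

lemma dl1_lt1: "dl1 < 1" using dl1_le d1 by simp

lemma ln_pos: assumes "1 \<le> n" shows "0 < ln (real n / dl1)"
proof -
  have "real n / dl1 > 1" using assms dl1_pos dl1_lt1 by (simp add: less_divide_eq)
  then show ?thesis by (rule ln_gt_zero)
qed

lemma cc_pos: "1 \<le> n \<Longrightarrow> 0 < cc n"
  unfolding cc_def using ln_pos by simp

lemma lam_pos: "1 \<le> n \<Longrightarrow> 0 < lam n"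
  unfolding lam_def using cc_pos by simp

lemma gfun_snoc:
  assumes "length L < n"
  shows "gfun n (L @ [y]) = gfun n L * exp (- ((lam n)^2 / 8)) * exp (lam n * y)"
proof -
  have t1: "take n (L @ [y]) = L @ [y]" and t2: "take n L = L" using assms by auto
  have m1: "min (length (L @ [y])) n = Suc (length L)" and m2: "min (length L) n = length L" using assms by auto
  have "gfun n (L @ [y]) = exp (lam n * (sum_list L + y - cc n) + (lam n)^2 * (real n - real (Suc (length L))) / 8)"
    unfolding gfun_def t1 m1 by simp
  also have "\<dots> = exp ((lam n * (sum_list L - cc n) + (lam n)^2 * (real n - real (length L)) / 8) + (- ((lam n)^2 / 8)) + lam n * y)"
    by (rule arg_cong[where f = exp]) (simp add: field_simps)
  also have "\<dots> = gfun n L * exp (- ((lam n)^2 / 8)) * exp (lam n * y)"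
    unfolding gfun_def t2 m2 mult_exp_exp by (simp add: algebra_simps)
  finally show ?thesis .
qed

lemma gfun_old:
  assumes "n \<le> length L"
  shows "gfun n (L @ [y]) = gfun n L"
proof -
  have "take n (L @ [y]) = take n L" using assms by simp
  moreover have "min (length (L @ [y])) n = min (length L) n" using assms by simp
  ultimately show ?thesis unfolding gfun_def by simp
qed

lemma hoeff:
  fixes Q :: "'b pmf"
  assumes bd: "\<forall>x\<in>set_pmf Q. a \<le> f x \<and> f x \<le> a + 1" and E0: "measure_pmf.expectation Q f = 0"
    and l: "l > 0"
  shows "(\<integral>\<^sup>+x. ennreal (exp (l * f x)) \<partial>Q) \<le> ennreal (exp (l^2 / 8))"
proof -
  have "interval_bounded_random_variable (measure_pmf Q) f a (a + 1)"
    unfolding interval_bounded_random_variable_def interval_bounded_random_variable_axioms_def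
    using bd by (auto simp: prob_space_measure_pmf AE_measure_pmf_iff)
  from interval_bounded_random_variable.Hoeffdings_lemma_nn_integral_0[OF this l E0]
  show ?thesis by simp
qed

lemma G_step:
  fixes Q :: "'b pmf"
  assumes bd: "\<forall>x\<in>set_pmf Q. a \<le> f x \<and> f x \<le> a + 1" and E0: "measure_pmf.expectation Q f = 0"
  shows "(\<integral>\<^sup>+x. G M (L @ [f x]) \<partial>Q) \<le> G M L"
proof -
  have "(\<integral>\<^sup>+x. G M (L @ [f x]) \<partial>Q) = (\<Sum>n\<in>{1..M}. \<integral>\<^sup>+x. ennreal (gfun n (L @ [f x])) \<partial>Q)"
    unfolding G_def by (rule nn_integral_sum) simp
  also have "\<dots> \<le> (\<Sum>n\<in>{1..M}. ennreal (gfun n L))"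
  proof (rule sum_mono)
    fix n assume n: "n \<in> {1..M}"
    show "(\<integral>\<^sup>+x. ennreal (gfun n (L @ [f x])) \<partial>Q) \<le> ennreal (gfun n L)"
    proof (cases "n \<le> length L")
      case True
      then have "(\<integral>\<^sup>+x. ennreal (gfun n (L @ [f x])) \<partial>Q) = (\<integral>\<^sup>+x. ennreal (gfun n L) \<partial>Q)"
        by (simp add: gfun_old)
      also have "\<dots> = ennreal (gfun n L)" by (simp add: measure_pmf.emeasure_space_1)
      finally show ?thesis by simp
    next
      case False
      let ?C = "gfun n L * exp (- ((lam n)^2 / 8))"
      have C0: "?C \<ge> 0" unfolding gfun_def by simp
      have "(\<integral>\<^sup>+x. ennreal (gfun n (L @ [f x])) \<partial>Q) = (\<integral>\<^sup>+x. ennreal ?C * ennreal (exp (lam n * f x)) \<partial>Q)"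
        using False C0 by (simp add: gfun_snoc ennreal_mult)
      also have "\<dots> = ennreal ?C * (\<integral>\<^sup>+x. ennreal (exp (lam n * f x)) \<partial>Q)"
        by (rule nn_integral_cmult) simp
      also have "\<dots> \<le> ennreal ?C * ennreal (exp ((lam n)^2 / 8))"
        using hoeff[OF bd E0 lam_pos] n by (intro mult_left_mono) auto
      also have "\<dots> = ennreal (gfun n L)"
        using C0 by (simp add: ennreal_mult[symmetric] mult.assoc exp_add[symmetric])
      finally show ?thesis .
    qed
  qed
  also have "\<dots> = G M L" unfolding G_def ..
  finally show ?thesis .
qed

lemma inv_sq_sum: "1 \<le> M \<Longrightarrow> (\<Sum>n\<in>{1..M}. 1 / (real n)^2) \<le> 2 - 1 / real M"
proof (induction M rule: nat_induct_at_least)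
  case base
  then show ?case by simp
next
  case (Suc M)
  have a: "real M * real (Suc M) \<le> (real (Suc M))^2" by (simp add: power2_eq_square)
  have b: "0 < real M * real (Suc M)" using Suc.hyps by simp
  have c: "real M > 0" using Suc.hyps by simp
  have e1: "1 / (real (Suc M))^2 \<le> 1 / (real M * real (Suc M))" using a b by (intro divide_left_mono) auto
  have e2: "1 / (real M * real (Suc M)) = 1 / real M - 1 / real (Suc M)" using c by (simp add: field_simps)
  have "1 / (real (Suc M))^2 \<le> 1 / real M - 1 / real (Suc M)" using e1 e2 by simp
  then show ?case using Suc.IH by (simp add: sum.cl_ivl_Suc)
qed

lemma gfun_nil: assumes "1 \<le> n" shows "gfun n [] \<le> dl1^2 / (real n)^2"
proof -
  have lnp: "0 < ln (real n / dl1)" using ln_pos[OF assms] .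
  have cc2: "(cc n)^2 = 2 * real n * ln (real n / dl1)" unfolding cc_def using lnp by simp
  have "gfun n [] = exp (- (lam n * cc n) + (lam n)^2 * real n / 8)" unfolding gfun_def by simp
  also have "- (lam n * cc n) + (lam n)^2 * real n / 8 = - 2 * (cc n)^2 / real n"
    unfolding lam_def using assms by (simp add: field_simps power2_eq_square)
  also have "\<dots> = - 4 * ln (real n / dl1)" unfolding cc2 using assms by simp
  finally have "gfun n [] = exp (- 4 * ln (real n / dl1))" .
  also have "\<dots> \<le> exp (- 2 * ln (real n / dl1))" using lnp by simp
  also have "exp (- 2 * ln (real n / dl1)) = (real n / dl1) powr (-2)"
    using assms dl1_pos by (simp add: powr_def)
  also have "\<dots> = dl1^2 / (real n)^2"
    using assms dl1_pos by (simp add: powr_minus power_divide divide_simps)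
  finally show ?thesis .
qed

lemma G_nil: "G M [] \<le> ennreal (\<delta> / 4)"
proof -
  have "(\<Sum>n\<in>{1..M}. gfun n []) \<le> (\<Sum>n\<in>{1..M}. dl1^2 * (1 / (real n)^2))"
    by (intro sum_mono) (use gfun_nil in auto)
  also have "\<dots> = dl1^2 * (\<Sum>n\<in>{1..M}. 1 / (real n)^2)" by (simp add: sum_distrib_left)
  also have "\<dots> \<le> dl1^2 * 2"
  proof (cases "M = 0")
    case True then show ?thesis by simp
  next
    case False
    have "0 \<le> 1 / real M" by simp
    then have "(\<Sum>n\<in>{1..M}. 1 / (real n)^2) \<le> 2" using inv_sq_sum[of M] False by linarith
    then show ?thesis by (intro mult_left_mono) auto
  qed
  also have "\<dots> \<le> \<delta> / 4"
  proof -
    have "dl1^2 \<le> dl1" using dl1_pos dl1_lt1 by (simp add: power2_eq_square mult_le_one)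
    then show ?thesis using dl1_le d0 by simp
  qed
  finally have *: "(\<Sum>n\<in>{1..M}. gfun n []) \<le> \<delta> / 4" .
  have "G M [] = ennreal (\<Sum>n\<in>{1..M}. gfun n [])"
    unfolding G_def by (subst sum_ennreal) (auto simp: gfun_def)
  then show ?thesis using * by (simp add: ennreal_leI)
qed

abbreviation "\<nu> \<equiv> env i0"

definition rem :: "('a, 'o, 'r) hist \<Rightarrow> nat" where
  "rem h = (case phase (run h) of None \<Rightarrow> 0 | Some ph \<Rightarrow> (case ph of Phase u l p \<kappa> vu vl k R \<Rightarrow> d - k))"

definition Phi :: "nat \<Rightarrow> ('a, 'o, 'r) hist \<Rightarrow> ennreal" where
  "Phi M h = (\<integral>\<^sup>+h'. G M (Xs (run h') i0 0) \<partial>hist_ext \<nu> pol h (rem h))"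

lemma supp1: "c \<in> set_pmf (hist_ext \<nu>' \<pi> h 1) \<Longrightarrow> \<exists>x. c = h @ [x]"
  using hist_ext_support[of c \<nu>' \<pi> h 1] by (auto simp: length_Suc_conv)

definition Rs :: "('a, 'o, 'r) hist \<Rightarrow> ('a, 'o, 'r) hist \<Rightarrow> real" where
  "Rs h h' = (\<Sum>k<d. \<gamma> ^ k * rew_at rew h' (length h + k))"

lemma Rs_app: "length xs = d \<Longrightarrow> Rs h (h @ xs) = Rsum xs"
  unfolding Rs_def Rsum_def rew_at_def by (simp add: nth_append)

lemma Rs_bd: "0 \<le> (1 - \<gamma>) * Rs h h'" "(1 - \<gamma>) * Rs h h' \<le> 1"
proof -
  have r: "\<And>k. 0 \<le> rew_at rew h' k \<and> rew_at rew h' k \<le> 1" unfolding rew_at_def using rew_bd by blast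
  have "0 \<le> Rs h h'" unfolding Rs_def using r g0 by (intro sum_nonneg) simp
  then show "0 \<le> (1 - \<gamma>) * Rs h h'" using g1 by simp
  have "Rs h h' \<le> (\<Sum>k<d. \<gamma> ^ k)" unfolding Rs_def
    using r g0 by (intro sum_mono) (simp add: mult_left_le)
  then have "(1 - \<gamma>) * Rs h h' \<le> (1 - \<gamma>) * (\<Sum>k<d. \<gamma> ^ k)" using g1 by (intro mult_left_mono) auto
  also have "\<dots> = 1 - \<gamma> ^ d" by (rule one_diff_power_eq[symmetric])
  also have "\<dots> \<le> 1" using g0 by simp
  finally show "(1 - \<gamma>) * Rs h h' \<le> 1" .
qed

lemma phase_step_key:
  assumes ph: "phase (run h) = None" and dc: "dec (Ms (run h)) h = Some (u, l, p)"
  shows "(\<integral>\<^sup>+h'. G M (Xs (run h') i0 0) \<partial>hist_ext \<nu> pol h d) \<le> G M (Xs (run h) i0 0)"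
proof -
  let ?vu = "Vfin rew \<gamma> (env u) (opt p) h d" and ?vl = "Vfin rew \<gamma> (env l) (opt p) h d"
  let ?L = "Xs (run h) i0 0"
  let ?Q = "hist_ext \<nu> (opt p) h d"
  have MN: "Ms (run h) \<subseteq> {..<N}" using inv_run[of h] unfolding inv_st_def by blast
  note ds = dec_Some[OF dc MN]
  have Qeq: "hist_ext \<nu> pol h d = ?Q"
    by (rule hist_ext_cong) (rule phase_pol[OF ph dc])
  have fin: "\<And>h'. h' \<in> set_pmf ?Q \<Longrightarrow>
      run h' = merl_finalize \<gamma> \<epsilon> \<delta> N (run h) u l 0 ?vu ?vl (Rs h h')"
  proof -
    fix h' assume "h' \<in> set_pmf ?Q"
    then obtain xs where xs: "h' = h @ xs" "length xs = d" using hist_ext_support by blast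
    then show "run h' = merl_finalize \<gamma> \<epsilon> \<delta> N (run h) u l 0 ?vu ?vl (Rs h h')"
      using phase_run[OF ph dc, of xs] d_pos by (simp add: Rs_app)
  qed
  have int: "integrable (measure_pmf ?Q) f" for f :: "_ \<Rightarrow> real"
    by (rule integrable_measure_pmf_finite[OF hist_ext_finite])
  have ERs: "measure_pmf.expectation ?Q (Rs h) = Vfin rew \<gamma> \<nu> (opt p) h d"
    unfolding Vfin_def Rs_def ..
  show ?thesis unfolding Qeq
  proof (cases "i0 = u")
    case True
    let ?f = "\<lambda>h'. (1 - \<gamma>) * (?vu - Rs h h')"
    have "(\<integral>\<^sup>+h'. G M (Xs (run h') i0 0) \<partial>?Q) = (\<integral>\<^sup>+h'. G M (?L @ [?f h']) \<partial>?Q)"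
      using True ds(4) by (intro nn_integral_cong_AE) (auto simp: AE_measure_pmf_iff fin fin_Xs)
    also have "\<dots> \<le> G M ?L"
    proof (rule G_step)
      show "\<forall>x\<in>set_pmf ?Q. (1 - \<gamma>) * ?vu - 1 \<le> ?f x \<and> ?f x \<le> (1 - \<gamma>) * ?vu - 1 + 1"
        using Rs_bd by (auto simp: algebra_simps)
      have "measure_pmf.expectation ?Q ?f = (1 - \<gamma>) * (?vu - measure_pmf.expectation ?Q (Rs h))"
        using int by (simp add: measure_pmf.prob_space)
      also have "\<dots> = 0" using True ERs by simp
      finally show "measure_pmf.expectation ?Q ?f = 0" .
    qed
    finally show "(\<integral>\<^sup>+h'. G M (Xs (run h') i0 0) \<partial>?Q) \<le> G M ?L" .
  next
    case False
    show "(\<integral>\<^sup>+h'. G M (Xs (run h') i0 0) \<partial>?Q) \<le> G M ?L"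
    proof (cases "i0 = l")
      case True
      let ?f = "\<lambda>h'. (1 - \<gamma>) * (Rs h h' - ?vl)"
      have "(\<integral>\<^sup>+h'. G M (Xs (run h') i0 0) \<partial>?Q) = (\<integral>\<^sup>+h'. G M (?L @ [?f h']) \<partial>?Q)"
        using True False ds(4) by (intro nn_integral_cong_AE) (auto simp: AE_measure_pmf_iff fin fin_Xs)
      also have "\<dots> \<le> G M ?L"
      proof (rule G_step)
        show "\<forall>x\<in>set_pmf ?Q. - ((1 - \<gamma>) * ?vl) \<le> ?f x \<and> ?f x \<le> - ((1 - \<gamma>) * ?vl) + 1"
          using Rs_bd by (auto simp: algebra_simps)
        have "measure_pmf.expectation ?Q ?f = (1 - \<gamma>) * (measure_pmf.expectation ?Q (Rs h) - ?vl)"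
          using int by (simp add: measure_pmf.prob_space)
        also have "\<dots> = 0" using True ERs by simp
        finally show "measure_pmf.expectation ?Q ?f = 0" .
      qed
      finally show ?thesis .
    next
      case False2: False
      have "(\<integral>\<^sup>+h'. G M (Xs (run h') i0 0) \<partial>?Q) = (\<integral>\<^sup>+h'. G M ?L \<partial>?Q)"
        using False False2 ds(4) by (intro nn_integral_cong_AE) (auto simp: AE_measure_pmf_iff fin fin_Xs)
      also have "\<dots> = G M ?L" by (simp add: measure_pmf.emeasure_space_1)
      finally show ?thesis by simp
    qed
  qed
qed

lemma super:
  "(\<integral>\<^sup>+c. Phi M c \<partial>hist_ext \<nu> pol h 1) \<le> Phi M h"
proof (cases "phase (run h)")
  case (Some ph)
  then obtain u l p \<kappa> vu vl k R where phv: "ph = Phase u l p \<kappa> vu vl k R" by (cases ph) auto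
  have props: "\<kappa> = 0" "k < d" using inv_run[of h] Some phv unfolding inv_st_def by blast+
  have remh: "rem h = Suc (d - Suc k)" using Some phv props by (simp add: rem_def)
  have remc: "rem c = d - Suc k" if c_in: "c \<in> set_pmf (hist_ext \<nu> pol h 1)" for c
  proof -
    obtain x where c: "c = h @ [x]" using supp1[OF c_in] by blast
    have "run c = merl_advance rew \<gamma> \<epsilon> \<delta> N (run h) (Phase u l p \<kappa> vu vl k R) (snd (snd x))"
      using Some phv by (simp add: c run_snoc merl_step_def)
    then show ?thesis by (auto simp: rem_def advance_eq fin_phase)
  qed
  have "Phi M h = (\<integral>\<^sup>+c. (\<integral>\<^sup>+h'. G M (Xs (run h') i0 0) \<partial>hist_ext \<nu> pol c (d - Suc k)) \<partial>hist_ext \<nu> pol h 1)"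
    unfolding Phi_def remh hist_ext_one[of _ _ _ "d - Suc k"] by simp
  also have "\<dots> = (\<integral>\<^sup>+c. Phi M c \<partial>hist_ext \<nu> pol h 1)"
    by (intro nn_integral_cong_AE) (auto simp: AE_measure_pmf_iff Phi_def remc)
  finally show ?thesis by simp
next
  case None
  show ?thesis
  proof (cases "dec (Ms (run h)) h")
    case None2: None
    have "Phi M c = Phi M h" if c_in: "c \<in> set_pmf (hist_ext \<nu> pol h 1)" for c
    proof -
      obtain x where c: "c = h @ [x]" using supp1[OF c_in] by blast
      have "run c = run h" using None None2 by (simp add: c run_snoc merl_step_def)
      then show ?thesis using None by (simp add: Phi_def rem_def)
    qed
    then have "(\<integral>\<^sup>+c. Phi M c \<partial>hist_ext \<nu> pol h 1) = (\<integral>\<^sup>+c. Phi M h \<partial>hist_ext \<nu> pol h 1)"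
      by (intro nn_integral_cong_AE) (auto simp: AE_measure_pmf_iff)
    also have "\<dots> = Phi M h" by (simp add: measure_pmf.emeasure_space_1)
    finally show ?thesis by simp
  next
    case (Some y)
    then obtain u l p where dc: "dec (Ms (run h)) h = Some (u, l, p)" by (cases y) auto
    have remc: "rem c = d - 1" if c_in: "c \<in> set_pmf (hist_ext \<nu> pol h 1)" for c
    proof -
      obtain x where c: "c = h @ [x]" using supp1[OF c_in] by blast
      show ?thesis using phase_run[OF None dc, of "[x]"] d_pos
        by (auto simp: c rem_def fin_phase)
    qed
    have "(\<integral>\<^sup>+c. Phi M c \<partial>hist_ext \<nu> pol h 1) =
        (\<integral>\<^sup>+c. (\<integral>\<^sup>+h'. G M (Xs (run h') i0 0) \<partial>hist_ext \<nu> pol c (d - 1)) \<partial>hist_ext \<nu> pol h 1)"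
      by (intro nn_integral_cong_AE) (auto simp: AE_measure_pmf_iff Phi_def remc)
    also have "\<dots> = (\<integral>\<^sup>+h'. G M (Xs (run h') i0 0) \<partial>hist_ext \<nu> pol h (Suc (d - 1)))"
      unfolding hist_ext_one[of _ _ _ "d - 1"] by simp
    also have "Suc (d - 1) = d" using d_pos by simp
    also have "(\<integral>\<^sup>+h'. G M (Xs (run h') i0 0) \<partial>hist_ext \<nu> pol h d) \<le> G M (Xs (run h) i0 0)"
      by (rule phase_step_key[OF None dc])
    also have "G M (Xs (run h) i0 0) = Phi M h" using None by (simp add: Phi_def rem_def)
    finally show ?thesis .
  qed
qed

lemma super_iter: "(\<integral>\<^sup>+h. Phi M h \<partial>hist_ext \<nu> pol [] T) \<le> Phi M []"
proof (induction T)
  case 0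
  then show ?case by simp
next
  case (Suc T)
  have "(\<integral>\<^sup>+h. Phi M h \<partial>hist_ext \<nu> pol [] (Suc T)) =
      (\<integral>\<^sup>+h. (\<integral>\<^sup>+c. Phi M c \<partial>hist_ext \<nu> pol h 1) \<partial>hist_ext \<nu> pol [] T)"
    using hist_ext_add[of \<nu> pol "[]" T 1] by simp
  also have "\<dots> \<le> (\<integral>\<^sup>+h. Phi M h \<partial>hist_ext \<nu> pol [] T)"
    by (intro nn_integral_mono super)
  finally show ?case using Suc by simp
qed

lemma Phi_nil: "Phi M [] \<le> ennreal (\<delta> / 4)"
  using G_nil by (simp add: Phi_def rem_def run_Nil merl_init_def)

lemma Phi_bad:
  assumes "length h \<le> T" and bad: "i0 \<notin> Ms (run h)" and MT: "M' = T + d"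
  shows "1 \<le> Phi M' h"
proof -
  have "1 \<le> G M' (Xs (run h') i0 0)" if h': "h' \<in> set_pmf (hist_ext \<nu> pol h (rem h))" for h'
  proof -
    obtain xs where xs: "h' = h @ xs" "length xs = rem h" using hist_ext_support[OF h'] by blast
    have "rem h \<le> d" by (auto simp: rem_def split: option.splits phase.splits)
    then have lh': "length h' \<le> M'" using xs assms by simp
    have "i0 \<notin> Ms (run h')" using bad Ms_mono xs by blast
    then have rc: "removal_cond \<gamma> \<epsilon> \<delta> N (Xs (run h') i0 0)"
      using inv_run[of h'] mu unfolding inv_st_def by blast
    let ?X = "Xs (run h') i0 0"
    let ?n = "length ?X"
    have n1: "1 \<le> ?n" using removal_len[OF rc] .
    have nM: "?n \<le> M'" using inv_run[of h'] lh' unfolding inv_st_def by (meson le_trans)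
    have S: "sum_list ?X \<ge> cc ?n" using rc unfolding removal_cond_def cc_def dl1_def by simp
    have "gfun ?n ?X = exp (lam ?n * (sum_list ?X - cc ?n))" unfolding gfun_def by simp
    also have "\<dots> \<ge> 1" using S lam_pos[OF n1] by simp
    finally have g1: "1 \<le> gfun ?n ?X" .
    have "ennreal (gfun ?n ?X) \<le> G M' ?X"
      unfolding G_def using n1 nM by (intro member_le_sum) auto
    moreover have "(1::ennreal) \<le> ennreal (gfun ?n ?X)" using ennreal_leI[OF g1] by simp
    ultimately show ?thesis by (rule order_trans[rotated])
  qed
  then have "(\<integral>\<^sup>+h'. 1 \<partial>hist_ext \<nu> pol h (rem h)) \<le> Phi M' h"
    unfolding Phi_def by (intro nn_integral_mono_AE) (auto simp: AE_measure_pmf_iff)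
  then show ?thesis by (simp add: measure_pmf.emeasure_space_1)
qed

lemma bad_bound: "emeasure (hist_ext \<nu> pol [] T) {h. i0 \<notin> Ms (run h)} \<le> ennreal (\<delta> / 4)"
proof -
  let ?M = "T + d"
  have "emeasure (hist_ext \<nu> pol [] T) {h. i0 \<notin> Ms (run h)} =
      (\<integral>\<^sup>+h. indicator {h. i0 \<notin> Ms (run h)} h \<partial>hist_ext \<nu> pol [] T)"
    by simp
  also have "\<dots> \<le> (\<integral>\<^sup>+h. Phi ?M h \<partial>hist_ext \<nu> pol [] T)"
  proof (intro nn_integral_mono_AE, unfold AE_measure_pmf_iff, intro ballI)
    fix h assume "h \<in> set_pmf (hist_ext \<nu> pol [] T)"
    then have "length h = T" using hist_ext_support by fastforce
    then show "indicator {h. i0 \<notin> Ms (run h)} h \<le> Phi ?M h"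
      using Phi_bad[of h T ?M] by (auto simp: indicator_def)
  qed
  also have "\<dots> \<le> Phi ?M []" by (rule super_iter)
  also have "\<dots> \<le> ennreal (\<delta> / 4)" by (rule Phi_nil)
  finally show ?thesis .
qed

end


theorem lemma2:
  fixes rew :: "'r::finite \<Rightarrow> real"
    and env :: "nat \<Rightarrow> ('a::finite, 'o::finite, 'r) env"
    and opt :: "nat \<Rightarrow> ('a, 'o, 'r) policy"
    and tb :: "('a, 'o, 'r) hist \<Rightarrow> nat set \<Rightarrow> nat \<times> nat \<times> nat"
    and \<gamma> \<epsilon> \<delta> :: real
    and N i0 :: nat
    and P :: "('a \<times> 'o \<times> 'r) stream measure"
  assumes rew: "inj rew" "\<forall>x. 0 \<le> rew x \<and> rew x \<le> 1"
    and \<gamma>: "0 < \<gamma>" "\<gamma> < 1"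
    and \<epsilon>: "0 < \<epsilon>" "\<epsilon> \<le> 1"
    and \<delta>: "0 < \<delta>" "\<delta> < 1"
    and M: "inj_on env {..<N}"
    and opt: "\<forall>i<N. optimal_policy rew \<gamma> (env i) (opt i)"
    and tb: "valid_tiebreak rew \<gamma> \<epsilon> N env opt tb"
    and mu: "i0 < N"
    and P: "is_interaction_measure (env i0) (merl_policy rew \<gamma> \<epsilon> \<delta> N env opt tb) P"
  shows "measure P {\<omega> \<in> space P. \<forall>t. i0 \<in> Ms (merl_run rew \<gamma> \<epsilon> \<delta> N env opt tb (stake t \<omega>))}
           \<ge> 1 - \<delta> / 4"
proof -
  interpret merl_loc rew env opt tb \<gamma> \<epsilon> \<delta> N i0
    using rew \<gamma> \<epsilon> \<delta> tb mu by unfold_locales auto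
  let ?pol = "merl_policy rew \<gamma> \<epsilon> \<delta> N env opt tb"
  let ?run = "merl_run rew \<gamma> \<epsilon> \<delta> N env opt tb"
  have ps: "prob_space P" and sP: "sets P = sets (stream_space (count_space UNIV))"
    and cyl: "\<And>h. measure P {\<omega> \<in> space P. stake (length h) \<omega> = h} = pmf (hist_ext (env i0) ?pol [] (length h)) h"
    using P unfolding is_interaction_measure_def by auto
  interpret prob_space P by (rule ps)
  have stm: "stake T \<in> measurable P (count_space UNIV)" for T
    using measurable_stake[of T] by (simp add: measurable_cong_sets[OF sP refl])
  have evA: "{\<omega> \<in> space P. stake T \<omega> \<in> A} \<in> sets P" for T A
  proof -
    have "{\<omega> \<in> space P. stake T \<omega> \<in> A} = stake T -` A \<inter> space P" by auto
    also have "\<dots> \<in> sets P" by (rule measurable_sets[OF stm]) simp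
    finally show ?thesis .
  qed
  define B where "B T = {\<omega> \<in> space P. i0 \<notin> Ms (?run (stake T \<omega>))}" for T
  have B_ev: "B T \<in> sets P" for T
    using evA[of T "{h. i0 \<notin> Ms (?run h)}"] unfolding B_def by simp
  have B_bd: "measure P (B T) \<le> \<delta> / 4" for T
  proof -
    define Bad where "Bad = {h :: ('a \<times> 'o \<times> 'r) list. set h \<subseteq> UNIV \<and> length h = T \<and> i0 \<notin> Ms (?run h)}"
    have finBad: "finite Bad"
      by (rule finite_subset[OF _ finite_lists_length_eq[of "UNIV :: ('a \<times> 'o \<times> 'r) set" T]])
        (auto simp: Bad_def)
    have BU: "B T = (\<Union>h\<in>Bad. {\<omega> \<in> space P. stake T \<omega> = h})"
      unfolding B_def Bad_def by auto
    have "measure P (B T) = (\<Sum>h\<in>Bad. measure P {\<omega> \<in> space P. stake T \<omega> = h})"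
      unfolding BU
      by (rule finite_measure_finite_Union[OF finBad])
        (use evA[of T "{_}"] in \<open>auto simp: disjoint_family_on_def\<close>)
    also have "\<dots> = (\<Sum>h\<in>Bad. pmf (hist_ext (env i0) ?pol [] T) h)"
      by (intro sum.cong refl) (use cyl in \<open>auto simp: Bad_def\<close>)
    also have "\<dots> = measure (hist_ext (env i0) ?pol [] T) Bad"
      by (rule measure_measure_pmf_finite[OF finBad, symmetric])
    also have "\<dots> \<le> measure (hist_ext (env i0) ?pol [] T) {h. i0 \<notin> Ms (?run h)}"
      by (intro measure_pmf.finite_measure_mono) (auto simp: Bad_def)
    also have "\<dots> \<le> \<delta> / 4"
      using bad_bound[of T] \<delta> by (simp add: measure_pmf.emeasure_eq_measure ennreal_le_iff)
    finally show ?thesis .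
  qed
  have inc: "incseq B"
  proof (rule incseq_SucI)
    fix T
    have "Ms (?run (stake (Suc T) \<omega>)) \<subseteq> Ms (?run (stake T \<omega>))" for \<omega>
      unfolding stake_Suc by (rule Ms_mono)
    then show "B T \<subseteq> B (Suc T)"
      unfolding B_def by blast
  qed
  have lim: "(\<lambda>T. measure P (B T)) \<longlonglongrightarrow> measure P (\<Union>T. B T)"
    by (rule finite_Lim_measure_incseq) (use B_ev inc in auto)
  have UB: "measure P (\<Union>T. B T) \<le> \<delta> / 4"
    by (rule LIMSEQ_le_const2[OF lim]) (use B_bd in auto)
  have Uev: "(\<Union>T. B T) \<in> sets P" using B_ev by auto
  have eq: "{\<omega> \<in> space P. \<forall>t. i0 \<in> Ms (?run (stake t \<omega>))} = space P - (\<Union>T. B T)"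
    unfolding B_def by auto
  show ?thesis unfolding eq using prob_compl[OF Uev] UB by simp
qed

end
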